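(* Consider the setting in the context and the linear system $$\dot q_2=-J_2q_2+\tilde\kappa\left(TP_{\mathcal{S}^\perp}\tilde M B^TT^{-1}\right)_{(n-2\times n-2)}q_2,\qquad q_2\in\mathbb{C}^{n-2}.$$ Let $Q\in\mathbb{C}^{(n-2)\times(n-2)}$ be a Hermitian positive definite matrix with $QJ_2+J_2^HQ\succeq 2I_{n-2}$ ($X^H$ the conjugate transpose). If $$0\le\tilde\kappa<\Big(\big\|Q\left(T\tilde MB^TT^{-1}\right)_{(n-2\times n-2)}\big\|_2\Big)^{-1},$$ then this system is exponentially stable.
   Context: Let $n\ge 3$ agents on an undirected graph $\mathcal{G}=(\mathcal{V},\mathcal{E})$, $\mathcal{V}=\{1,\dots,n\}$, $\mathcal{N}_i=\{j:(i,j)\in\mathcal{E}\}$. Let $p^*\in\mathbb{C}^n$ be a reference shape (not a multiple of the all-ones vector $\mathbf{1}_n$), and let $L$ be the complex Laplacian with nonzero weights $\omega_{ij}$ ($L_{ii}=\sum_{k\in\mathcal{N}_i}\omega_{ik}$, $L_{ij}=-\omega_{ij}$ for $j\in\mathcal{N}_i$, $0$ otherwise) satisfying $\sum_{j\in\mathcal{N}_i}\omega_{ij}(p^*_i-p^*_j)=0$ for all $i$, with $0$ an eigenvalue of $L$ of algebraic and geometric multiplicity 2 and eigenspace $\mathcal{S}=\operatorname{span}\{\mathbf{1}_n,p^*\}$. Let $K=\operatorname{diag}(k_i)$, $k_i\in\mathbb{C}\setminus\{0\}$, be such that all eigenvalues of $KL$ other than the two zero eigenvalues have positive real part, so $\operatorname{Ker}(KL)=\mathcal{S}$.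 Let $J=TKLT^{-1}=\operatorname{diag}(J_1,J_2)$ be a Jordan form of $KL$ with invertible $T$, where $J_1=0\in\mathbb{C}^{2\times2}$ corresponds to the zero eigenvalues and $J_2\in\mathbb{C}^{(n-2)\times(n-2)}$ (so $-J_2$ is Hurwitz). Let $\mathcal{S}^\perp$ be the orthogonal complement of $\operatorname{Ker}(KL)$ and $P_{\mathcal{S}^\perp}$ the orthogonal projection onto it. Let $B$ be the incidence matrix of an orientation of $\mathcal{G}$ ($b_{ik}=+1$ if $i$ is the tail of edge $k$, $-1$ if $i$ is its head, $0$ otherwise) and $\tilde M=\kappa_tM_t+\kappa_rM_r+\kappa_sM_s$ with fixed $\kappa_t,\kappa_r,\kappa_s>0$, where for motion parameters $\mu_{ij}\in\mathbb{C}$ ($\mu_{ij}=0$ if $j\notin\mathcal{N}_i$) the matrix $M$ has entries $m_{ik}=\mu_{i,\mathrm{head}_k}$ if $i$ is the tail of edge $k$, $m_{ik}=-\mu_{i,\mathrm{tail}_k}$ if $i$ is its head, $0$ otherwise, so that $(MB^Tx)_i=\sum_{j\in\mathcal{N}_i}\mu_{ij}(x_i-x_j)$; $M_t,M_r,M_s$ are built from translation, rotation and scaling parameters satisfying $M_tB^Tp^*=v^*\mathbf{1}_n$, $M_rB^Tp^*=\iota\omega p^*$, $M_sB^Tp^*=ap^*$ for given $v^*\in\mathbb{C}$, $a,\omega\in\mathbb{R}$. For $X\in\mathbb{C}^{n\times n}$, $(X)_{(n-2\times n-2)}$ denotes the submatrix obtained by deleting the first two rows and the first two columns. $\|\cdot\|_2$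 is the spectral norm. *)

theory Defs
  imports Complex_Main "Jordan_Normal_Form.Jordan_Normal_Form" "Jordan_Normal_Form.Schur_Decomposition"
begin

definition cinner :: "complex vec \<Rightarrow> complex vec \<Rightarrow> complex" where
  "cinner v w = (\<Sum>i<dim_vec v. v $ i * cnj (w $ i))"

definition cvnorm :: "complex vec \<Rightarrow> real" where
  "cvnorm v = sqrt (\<Sum>i<dim_vec v. (cmod (v $ i))\<^sup>2)"

definition spec_norm :: "complex mat \<Rightarrow> real" where
  "spec_norm A = Sup {cvnorm (A *\<^sub>v v) | v. v \<in> carrier_vec (dim_col A) \<and> cvnorm v \<le> 1}"

definition undirected_graph :: "nat \<Rightarrow> (nat \<times> nat) set \<Rightarrow> bool" where
  "undirected_graph n E \<longleftrightarrow> E \<subseteq> {0..<n} \<times> {0..<n} \<and> (\<forall>i j. (i,j) \<in> E \<longrightarrow> (j,i) \<in> E)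
     \<and> (\<forall>i. (i,i) \<notin> E)"

definition nbrs :: "(nat \<times> nat) set \<Rightarrow> nat \<Rightarrow> nat set" where
  "nbrs E i = {j. (i,j) \<in> E}"

definition cLaplacian :: "nat \<Rightarrow> (nat \<times> nat) set \<Rightarrow> (nat \<Rightarrow> nat \<Rightarrow> complex) \<Rightarrow> complex mat" where
  "cLaplacian n E w = mat n n (\<lambda>(i,j). if i = j then (\<Sum>k\<in>nbrs E i. w i k)
                                       else if j \<in> nbrs E i then - w i j else 0)"

(* an orientation of the undirected graph: list of (tail, head) pairs, one per undirected edge *)
definition orientation :: "(nat \<times> nat) set \<Rightarrow> (nat \<times> nat) list \<Rightarrow> bool" where
  "orientation E ed \<longleftrightarrow> distinct ed \<and> set ed \<subseteq> E
     \<and> (\<forall>(i,j)\<in>E. (i,j) \<in> set ed \<or> (j,i) \<in> set ed)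
     \<and> (\<forall>(i,j)\<in>set ed. (j,i) \<notin> set ed)"

definition incidence :: "nat \<Rightarrow> (nat \<times> nat) list \<Rightarrow> complex mat" where
  "incidence n ed = mat n (length ed) (\<lambda>(i,k). if i = fst (ed ! k) then 1
                                            else if i = snd (ed ! k) then -1 else 0)"

definition motion_mat :: "nat \<Rightarrow> (nat \<times> nat) list \<Rightarrow> (nat \<Rightarrow> nat \<Rightarrow> complex) \<Rightarrow> complex mat" where
  "motion_mat n ed mu = mat n (length ed) (\<lambda>(i,k). if i = fst (ed ! k) then mu i (snd (ed ! k))
                                            else if i = snd (ed ! k) then - mu i (fst (ed ! k)) else 0)"

definition del2 :: "complex mat \<Rightarrow> complex mat" where
  "del2 X = mat (dim_row X - 2) (dim_col X - 2) (\<lambda>(i,j). X $$ (i+2, j+2))"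

definition hermitian :: "complex mat \<Rightarrow> bool" where
  "hermitian A \<longleftrightarrow> A \<in> carrier_mat (dim_row A) (dim_row A) \<and> mat_adjoint A = A"

definition pos_def :: "complex mat \<Rightarrow> bool" where
  "pos_def A \<longleftrightarrow> hermitian A \<and>
     (\<forall>v \<in> carrier_vec (dim_row A). v \<noteq> 0\<^sub>v (dim_row A) \<longrightarrow> Re (cinner v (A *\<^sub>v v)) > 0)"

definition pos_semidef :: "complex mat \<Rightarrow> bool" where
  "pos_semidef A \<longleftrightarrow> hermitian A \<and>
     (\<forall>v \<in> carrier_vec (dim_row A). Re (cinner v (A *\<^sub>v v)) \<ge> 0)"

definition loewner_ge :: "complex mat \<Rightarrow> complex mat \<Rightarrow> bool" where
  "loewner_ge A B \<longleftrightarrow> pos_semidef (A - B)"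

definition orth_proj_perp :: "nat \<Rightarrow> complex vec set \<Rightarrow> complex mat \<Rightarrow> bool" where
  "orth_proj_perp n S P \<longleftrightarrow> P \<in> carrier_mat n n \<and>
     (\<forall>v \<in> carrier_vec n. (\<forall>s\<in>S. cinner (P *\<^sub>v v) s = 0) \<and> v - P *\<^sub>v v \<in> S)"

definition lin_solution :: "complex mat \<Rightarrow> (real \<Rightarrow> complex vec) \<Rightarrow> bool" where
  "lin_solution A x \<longleftrightarrow> (\<forall>t\<ge>0. x t \<in> carrier_vec (dim_row A)) \<and>
     (\<forall>t\<ge>0. \<forall>i<dim_row A.
        ((\<lambda>s. x s $ i) has_vector_derivative ((A *\<^sub>v x t) $ i)) (at t within {0..}))"

definition exp_stable :: "complex mat \<Rightarrow> bool" where
  "exp_stable A \<longleftrightarrow> (\<exists>c lam. lam > 0 \<and> (\<forall>x. lin_solution A x \<longrightarrow>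
       (\<forall>t\<ge>0. cvnorm (x t) \<le> c * exp (- lam * t) * cvnorm (x 0))))"

end

theory Submission
  imports Defs
begin


lemma amgm_t: fixes x y t :: real assumes "t > 0" shows "x * y \<le> (t * x\<^sup>2 + y\<^sup>2 / t) / 2"
proof -
  have "0 \<le> (t * x - y)\<^sup>2 / t" using assms by simp
  also have "(t * x - y)\<^sup>2 / t = t * x\<^sup>2 + y\<^sup>2 / t - 2 * (x * y)" using assms
    by (simp add: power2_eq_square field_simps)
  finally show ?thesis by simp
qed

lemma cs_real:
  fixes a b :: "nat \<Rightarrow> real"
  shows "(\<Sum>i\<in>I. a i * b i) \<le> sqrt (\<Sum>i\<in>I. (a i)\<^sup>2) * sqrt (\<Sum>i\<in>I. (b i)\<^sup>2)"
proof -
  define A where "A = (\<Sum>i\<in>I. (a i)\<^sup>2)"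
  define B where "B = (\<Sum>i\<in>I. (b i)\<^sup>2)"
  have A0: "A \<ge> 0" "B \<ge> 0" unfolding A_def B_def by (auto intro: sum_nonneg)
  have gen: "(\<Sum>i\<in>I. a i * b i) \<le> (t * A + B / t) / 2" if t: "t > 0" for t
  proof -
    have "(\<Sum>i\<in>I. a i * b i) \<le> (\<Sum>i\<in>I. (t * (a i)\<^sup>2 + (b i)\<^sup>2 / t) / 2)"
      by (rule sum_mono, rule amgm_t[OF t])
    also have "\<dots> = (t * A + B / t) / 2" unfolding A_def B_def
      by (simp add: sum.distrib flip: sum_divide_distrib sum_distrib_left)
    finally show ?thesis .
  qed
  have zero: "(\<Sum>i\<in>I. a i * b i) = 0" if "A = 0 \<or> B = 0"
  proof (cases "finite I")
    case True
    have "(\<forall>i\<in>I. (a i)\<^sup>2 = 0) \<or> (\<forall>i\<in>I. (b i)\<^sup>2 = 0)"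
      using that True unfolding A_def B_def by (simp add: sum_nonneg_eq_0_iff)
    thus ?thesis by auto
  qed simp
  show ?thesis
  proof (cases "A = 0 \<or> B = 0")
    case True
    thus ?thesis using zero A0 unfolding A_def[symmetric] B_def[symmetric] by simp
  next
    case False
    hence pos: "A > 0" "B > 0" using A0 by auto
    define t where "t = sqrt B / sqrt A"
    have t: "t > 0" unfolding t_def using pos by simp
    have "(t * A + B / t) / 2 = sqrt A * sqrt B" unfolding t_def using pos
      by (simp add: field_simps)
    thus ?thesis using gen[OF t] unfolding A_def B_def by simp
  qed
qed

lemma cvnorm_nonneg: "cvnorm v \<ge> 0"
  unfolding cvnorm_def by (simp add: sum_nonneg)

lemma cvnorm_sq: "(cvnorm v)\<^sup>2 = (\<Sum>i<dim_vec v. (cmod (v $ i))\<^sup>2)"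
  unfolding cvnorm_def by (simp add: sum_nonneg)

lemma cinner_cs:
  assumes "dim_vec w = dim_vec v"
  shows "cmod (cinner v w) \<le> cvnorm v * cvnorm w"
proof -
  have "cmod (cinner v w) \<le> (\<Sum>i<dim_vec v. cmod (v $ i) * cmod (w $ i))"
    unfolding cinner_def by (rule order_trans[OF norm_sum], simp add: norm_mult)
  also have "\<dots> \<le> cvnorm v * cvnorm w"
    unfolding cvnorm_def using assms cs_real by simp
  finally show ?thesis .
qed

lemma cinner_self: "cinner v v = complex_of_real ((cvnorm v)\<^sup>2)"
  unfolding cvnorm_sq cinner_def
  by (simp flip: complex_norm_square)

lemma cvnorm_smult: "cvnorm (c \<cdot>\<^sub>v v) = cmod c * cvnorm v"
proof -
  have "(cvnorm (c \<cdot>\<^sub>v v))\<^sup>2 = (\<Sum>i<dim_vec v. (cmod c * cmod (v$i))\<^sup>2)"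
    by (simp add: cvnorm_sq norm_mult)
  also have "\<dots> = (cmod c)\<^sup>2 * (\<Sum>i<dim_vec v. (cmod (v$i))\<^sup>2)"
    by (simp add: power_mult_distrib sum_distrib_left)
  also have "\<dots> = (cmod c * cvnorm v)\<^sup>2" by (simp only: cvnorm_sq power_mult_distrib)
  finally have h: "(cvnorm (c \<cdot>\<^sub>v v))\<^sup>2 = (cmod c * cvnorm v)\<^sup>2" .
  show ?thesis by (rule power2_eq_imp_eq[OF h cvnorm_nonneg mult_nonneg_nonneg[OF norm_ge_zero cvnorm_nonneg]])
qed

definition frob :: "complex mat \<Rightarrow> real" where
  "frob A = sqrt (\<Sum>i<dim_row A. \<Sum>j<dim_col A. (cmod (A $$ (i,j)))\<^sup>2)"

lemma frob_nonneg: "frob A \<ge> 0" unfolding frob_def by (simp add: sum_nonneg)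

lemma mat_vec_frob:
  assumes A: "A \<in> carrier_mat r c" and v: "v \<in> carrier_vec c"
  shows "cvnorm (A *\<^sub>v v) \<le> frob A * cvnorm v"
proof -
  define R where "R i = sqrt (\<Sum>j<c. (cmod (A $$ (i,j)))\<^sup>2)" for i
  have comp: "cmod ((A *\<^sub>v v) $ i) \<le> R i * cvnorm v" if i: "i < r" for i
  proof -
    have "(A *\<^sub>v v) $ i = (\<Sum>j<c. A $$ (i,j) * v $ j)"
      using A v i by (auto simp: scalar_prod_def lessThan_atLeast0 intro!: sum.cong)
    hence "cmod ((A *\<^sub>v v) $ i) \<le> (\<Sum>j<c. cmod (A $$ (i,j) * v $ j))"
      by (simp add: norm_sum)
    also have "\<dots> = (\<Sum>j<c. cmod (A $$ (i,j)) * cmod (v $ j))" by (simp add: norm_mult)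
    also have "\<dots> \<le> R i * cvnorm v" unfolding R_def cvnorm_def using v cs_real by simp
    finally show ?thesis .
  qed
  have "(cvnorm (A *\<^sub>v v))\<^sup>2 = (\<Sum>i<r. (cmod ((A *\<^sub>v v) $ i))\<^sup>2)"
    using A by (simp add: cvnorm_sq)
  also have "\<dots> \<le> (\<Sum>i<r. (R i * cvnorm v)\<^sup>2)"
    by (rule sum_mono, rule power_mono, use comp in auto)
  also have "\<dots> = (\<Sum>i<r. (R i)\<^sup>2) * (cvnorm v)\<^sup>2"
    by (simp add: power_mult_distrib sum_distrib_right)
  also have "(\<Sum>i<r. (R i)\<^sup>2) = (frob A)\<^sup>2"
    unfolding R_def frob_def using A by (simp add: sum_nonneg)
  finally have "(cvnorm (A *\<^sub>v v))\<^sup>2 \<le> (frob A * cvnorm v)\<^sup>2" by (simp add: power_mult_distrib)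
  thus ?thesis by (rule power2_le_imp_le[OF _ mult_nonneg_nonneg[OF frob_nonneg cvnorm_nonneg]])
qed

lemma cvnorm_zero_iff: "v \<in> carrier_vec c \<Longrightarrow> cvnorm v = 0 \<longleftrightarrow> v = 0\<^sub>v c"
proof
  assume v: "v \<in> carrier_vec c" and z: "cvnorm v = 0"
  hence "(\<Sum>i<c. (cmod (v $ i))\<^sup>2) = 0" using cvnorm_sq[of v] by simp
  hence "\<forall>i\<in>{..<c}. (cmod (v $ i))\<^sup>2 = 0" by (subst (asm) sum_nonneg_eq_0_iff) auto
  thus "v = 0\<^sub>v c" using v by (intro eq_vecI) auto
qed (simp add: cvnorm_def)

lemma spec_norm_bound:
  assumes A: "A \<in> carrier_mat r c" and v: "v \<in> carrier_vec c"
  shows "cvnorm (A *\<^sub>v v) \<le> spec_norm A * cvnorm v"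
proof -
  let ?S = "{cvnorm (A *\<^sub>v v) | v. v \<in> carrier_vec (dim_col A) \<and> cvnorm v \<le> 1}"
  have bdd: "bdd_above ?S"
  proof (rule bdd_aboveI)
    fix x assume "x \<in> ?S"
    then obtain u where u: "u \<in> carrier_vec c" "cvnorm u \<le> 1" "x = cvnorm (A *\<^sub>v u)" using A by auto
    have "x \<le> frob A * cvnorm u" using mat_vec_frob[OF A u(1)] u(3) by simp
    also have "\<dots> \<le> frob A" using u(2) frob_nonneg by (simp add: mult_left_le)
    finally show "x \<le> frob A" .
  qed
  show ?thesis
  proof (cases "cvnorm v = 0")
    case True
    hence "v = 0\<^sub>v c" using cvnorm_zero_iff[OF v] by simp
    hence "A *\<^sub>v v = 0\<^sub>v r" using A by auto
    thus ?thesis using True by (simp add: cvnorm_def)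
  next
    case False
    hence pos: "cvnorm v > 0" using cvnorm_nonneg[of v] by simp
    define u where "u = complex_of_real (1 / cvnorm v) \<cdot>\<^sub>v v"
    have u: "u \<in> carrier_vec c" "cvnorm u = 1" unfolding u_def using v pos by (auto simp: cvnorm_smult norm_divide)
    have "cvnorm (A *\<^sub>v u) \<in> ?S" using u A by auto
    hence le: "cvnorm (A *\<^sub>v u) \<le> spec_norm A" unfolding spec_norm_def using bdd by (rule cSup_upper)
    have "A *\<^sub>v u = complex_of_real (1 / cvnorm v) \<cdot>\<^sub>v (A *\<^sub>v v)" unfolding u_def
      using A v by (simp add: mult_mat_vec)
    hence "cvnorm (A *\<^sub>v u) = cvnorm (A *\<^sub>v v) / cvnorm v" using pos by (simp add: cvnorm_smult norm_divide)
    with le pos show ?thesis by (simp add: divide_le_eq mult.commute)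
  qed
qed



lemma mat_adjoint_carrier: "A \<in> carrier_mat r c \<Longrightarrow> mat_adjoint A \<in> carrier_mat c r"
  unfolding mat_adjoint_def by auto

lemma mat_adjoint_index: "A \<in> carrier_mat r c \<Longrightarrow> i < c \<Longrightarrow> j < r \<Longrightarrow>
   mat_adjoint A $$ (i,j) = cnj (A $$ (j,i))"
  unfolding mat_adjoint_def by (auto simp: mat_of_rows_def)

lemma mult_mat_vec_sum: "A \<in> carrier_mat r c \<Longrightarrow> v \<in> carrier_vec c \<Longrightarrow> i < r \<Longrightarrow>
   (A *\<^sub>v v) $ i = (\<Sum>j<c. A $$ (i,j) * v $ j)"
  by (auto simp: scalar_prod_def lessThan_atLeast0 intro!: sum.cong)

lemma cinner_adj:
  assumes A: "A \<in> carrier_mat r c" and u: "u \<in> carrier_vec c" and v: "v \<in> carrier_vec r"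
  shows "cinner (A *\<^sub>v u) v = cinner u (mat_adjoint A *\<^sub>v v)"
proof -
  have "cinner (A *\<^sub>v u) v = (\<Sum>i<r. (\<Sum>j<c. A $$ (i,j) * u $ j) * cnj (v $ i))"
    unfolding cinner_def using A u v by (auto intro!: sum.cong simp: scalar_prod_def lessThan_atLeast0)
  also have "\<dots> = (\<Sum>i<r. \<Sum>j<c. u $ j * (A $$ (i,j) * cnj (v $ i)))"
    by (rule sum.cong[OF refl], subst sum_distrib_right, rule sum.cong[OF refl], simp add: mult_ac)
  also have "\<dots> = (\<Sum>j<c. \<Sum>i<r. u $ j * (A $$ (i,j) * cnj (v $ i)))"
    by (rule sum.swap)
  also have "\<dots> = (\<Sum>j<c. u $ j * cnj (\<Sum>i<r. mat_adjoint A $$ (j,i) * v $ i))"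
    using A by (simp add: mat_adjoint_index sum_distrib_left)
  also have "\<dots> = cinner u (mat_adjoint A *\<^sub>v v)"
    unfolding cinner_def using A u v mat_adjoint_carrier[OF A]
    by (auto intro!: sum.cong simp: scalar_prod_def lessThan_atLeast0)
  finally show ?thesis .
qed

lemma cinner_swap: "dim_vec u = dim_vec v \<Longrightarrow> cinner v u = cnj (cinner u v)"
  unfolding cinner_def by (simp add: mult.commute)

lemma cinner_add_left: "u \<in> carrier_vec n \<Longrightarrow> w \<in> carrier_vec n \<Longrightarrow> v \<in> carrier_vec n \<Longrightarrow>
   cinner (u + w) v = cinner u v + cinner w v"
  unfolding cinner_def by (simp add: distrib_right sum.distrib)

lemma cinner_add_right: "u \<in> carrier_vec n \<Longrightarrow> w \<in> carrier_vec n \<Longrightarrow> v \<in> carrier_vec n \<Longrightarrow>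
   cinner v (u + w) = cinner v u + cinner v w"
  unfolding cinner_def by (simp add: distrib_left sum.distrib)

lemma cinner_smult_left: "cinner (a \<cdot>\<^sub>v u) v = a * cinner u v"
  unfolding cinner_def by (simp add: sum_distrib_left mult_ac)

lemma cinner_smult_right: "dim_vec v = dim_vec u \<Longrightarrow> cinner u (a \<cdot>\<^sub>v v) = cnj a * cinner u v"
  unfolding cinner_def by (auto simp: sum_distrib_left mult_ac intro!: sum.cong)

lemma herm_swap:
  assumes Q: "Q \<in> carrier_mat m m" "mat_adjoint Q = Q" and u: "u \<in> carrier_vec m" and v: "v \<in> carrier_vec m"
  shows "cinner v (Q *\<^sub>v u) = cnj (cinner u (Q *\<^sub>v v))"
proof -
  have "cinner v (Q *\<^sub>v u) = cinner (Q *\<^sub>v v) u" using cinner_adj[OF Q(1) v u] Q(2) by simp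
  also have "\<dots> = cnj (cinner u (Q *\<^sub>v v))" using Q u v by (intro cinner_swap) auto
  finally show ?thesis .
qed

lemma quad_nonneg_disc:
  fixes P C R :: real
  assumes P: "P \<ge> 0" and C: "C \<ge> 0" and R: "R \<ge> 0" and H: "\<And>t. P - 2 * t * C + t\<^sup>2 * C * R \<ge> 0"
  shows "C \<le> P * R"
proof (cases "C = 0")
  case True thus ?thesis using P R by simp
next
  case False
  hence Cp: "C > 0" using C by simp
  show ?thesis
  proof (cases "R = 0")
    case True
    have "P - 2 * (P / C + 1) * C + (P / C + 1)\<^sup>2 * C * R \<ge> 0" by (rule H)
    hence "P - 2 * (P / C + 1) * C \<ge> 0" using True by simp
    hence "P - 2 * P - 2 * C \<ge> 0" using Cp by (simp add: algebra_simps)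
    thus ?thesis using P Cp by simp
  next
    case False
    hence Rp: "R > 0" using R by simp
    have "P - 2 * (1 / R) * C + (1 / R)\<^sup>2 * C * R \<ge> 0" by (rule H)
    hence "P - C / R \<ge> 0" using Rp by (simp add: power2_eq_square field_simps)
    thus ?thesis using Rp by (simp add: field_simps)
  qed
qed

lemma herm_cs:
  assumes Q: "Q \<in> carrier_mat m m" "mat_adjoint Q = Q"
    and psd: "\<And>w. w \<in> carrier_vec m \<Longrightarrow> Re (cinner w (Q *\<^sub>v w)) \<ge> 0"
    and u: "u \<in> carrier_vec m" and v: "v \<in> carrier_vec m"
  shows "(cmod (cinner u (Q *\<^sub>v v)))\<^sup>2 \<le> Re (cinner u (Q *\<^sub>v u)) * Re (cinner v (Q *\<^sub>v v))"
proof -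
  define c where "c = cinner u (Q *\<^sub>v v)"
  define P where "P = Re (cinner u (Q *\<^sub>v u))"
  define R where "R = Re (cinner v (Q *\<^sub>v v))"
  have key: "P - 2 * t * (cmod c)\<^sup>2 + t\<^sup>2 * (cmod c)\<^sup>2 * R \<ge> 0" for t :: real
  proof -
    define s where "s = - (complex_of_real t * c)"
    define w where "w = u + s \<cdot>\<^sub>v v"
    have w: "w \<in> carrier_vec m" unfolding w_def using u v by auto
    have Qw: "Q *\<^sub>v w = Q *\<^sub>v u + s \<cdot>\<^sub>v (Q *\<^sub>v v)" unfolding w_def
      using Q u v by (simp add: mult_add_distrib_mat_vec mult_mat_vec)
    have Qu: "Q *\<^sub>v u \<in> carrier_vec m" and Qv: "Q *\<^sub>v v \<in> carrier_vec m" using Q u v by auto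
    have d: "dim_vec (Q *\<^sub>v v) = dim_vec u" "dim_vec (Q *\<^sub>v v) = dim_vec v" using Q u v by auto
    have "cinner w (Q *\<^sub>v w) = cinner u (Q *\<^sub>v u) + cnj s * c + s * cinner v (Q *\<^sub>v u)
        + s * cnj s * cinner v (Q *\<^sub>v v)"
      unfolding Qw unfolding w_def c_def
      using u v Qu Qv
      by (simp add: cinner_smult_right[OF d(1)] cinner_smult_right[OF d(2)] cinner_add_left[of _ m] cinner_add_right[of _ m] cinner_smult_left cinner_smult_right
          algebra_simps)
    also have "cinner v (Q *\<^sub>v u) = cnj c" unfolding c_def by (rule herm_swap[OF Q u v])
    finally have eq: "cinner w (Q *\<^sub>v w) = cinner u (Q *\<^sub>v u) + cnj s * c + s * cnj c
        + s * cnj s * cinner v (Q *\<^sub>v v)" .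
    have cc: "c * cnj c = complex_of_real ((cmod c)\<^sup>2)" by (rule complex_norm_square[symmetric])
    have e1: "cnj s * c = - complex_of_real (t * (cmod c)\<^sup>2)"
      unfolding s_def by (simp add: mult.commute[of "cnj c"] mult.assoc cc)
    have e2: "s * cnj c = - complex_of_real (t * (cmod c)\<^sup>2)"
      unfolding s_def by (simp add: mult.assoc cc)
    have e3: "s * cnj s = complex_of_real (t\<^sup>2 * (cmod c)\<^sup>2)"
      unfolding s_def by (simp add: power2_eq_square mult_ac cc)
    have "Re (cinner w (Q *\<^sub>v w)) = P - 2 * t * (cmod c)\<^sup>2 + t\<^sup>2 * (cmod c)\<^sup>2 * R"
      unfolding eq e1 e2 e3 P_def R_def by simp
    thus ?thesis using psd[OF w] by simp
  qed
  have "(cmod c)\<^sup>2 \<le> P * R"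
    by (rule quad_nonneg_disc[OF _ _ _ key]) (auto simp: P_def R_def psd u v)
  thus ?thesis unfolding c_def P_def R_def .
qed



lemma decay_real:
  fixes V :: "real \<Rightarrow> real" and lam :: real
  assumes D: "\<And>t. t \<ge> 0 \<Longrightarrow> \<exists>d. (V has_real_derivative d) (at t within {0..}) \<and> d \<le> - lam * V t"
    and t: "t \<ge> 0"
  shows "V t \<le> exp (- lam * t) * V 0"
proof -
  define g where "g s = exp (lam * s) * V s" for s
  have gd: "\<exists>d. (g has_real_derivative d) (at s within {0..}) \<and> d \<le> 0" if s: "s \<ge> 0" for s
  proof -
    obtain d where d: "(V has_real_derivative d) (at s within {0..})" "d \<le> - lam * V s" using D[OF s] by blast
    have "(g has_real_derivative (exp (lam * s) * lam * V s + exp (lam * s) * d)) (at s within {0..})"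
      unfolding g_def
      by (rule derivative_eq_intros d(1) refl)+ (simp add: algebra_simps)
    moreover have "exp (lam * s) * lam * V s + exp (lam * s) * d \<le> 0"
    proof -
      have "exp (lam * s) * lam * V s + exp (lam * s) * d = exp (lam * s) * (lam * V s + d)" by (simp add: algebra_simps)
      also have "\<dots> \<le> 0" using d(2) by (intro mult_nonneg_nonpos) auto
      finally show ?thesis .
    qed
    ultimately show ?thesis by blast
  qed
  have cont: "continuous_on {0..t} g"
  proof (rule continuous_on_subset[of "{0..}"])
    show "continuous_on {0..} g" unfolding continuous_on_eq_continuous_within
    proof
      fix s :: real assume "s \<in> {0..}"
      then obtain d where "(g has_real_derivative d) (at s within {0..})" using gd by auto
      thus "continuous (at s within {0..}) g" by (rule DERIV_continuous)
    qed
  qed auto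
  have "g t \<le> g 0"
  proof (rule DERIV_nonpos_imp_decreasing_open[OF t _ cont])
    fix s :: real assume s: "0 < s" "s < t"
    obtain d where d: "(g has_real_derivative d) (at s within {0..})" "d \<le> 0" using gd[of s] s by auto
    have "(g has_real_derivative d) (at s within {0<..})" by (rule DERIV_subset[OF d(1)]) auto
    hence "(g has_real_derivative d) (at s)" using s at_within_open[of s "{0<..}"] by simp
    thus "\<exists>y. (g has_real_derivative y) (at s) \<and> y \<le> 0" using d(2) by blast
  qed
  hence "exp (lam * t) * V t \<le> V 0" unfolding g_def by simp
  hence "exp (- lam * t) * (exp (lam * t) * V t) \<le> exp (- lam * t) * V 0"
    by (rule mult_left_mono) simp
  thus ?thesis by (simp add: mult.assoc[symmetric] exp_add[symmetric])
qed

lemma quad_deriv: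
  assumes A: "A \<in> carrier_mat m m" and Q: "Q \<in> carrier_mat m m"
    and x: "lin_solution A x" and t: "t \<ge> 0"
  shows "((\<lambda>s. Re (\<Sum>i<m. x s $ i * cnj (\<Sum>j<m. Q $$ (i,j) * x s $ j))) has_real_derivative
      Re (cinner (A *\<^sub>v x t) (Q *\<^sub>v x t) + cinner (x t) (Q *\<^sub>v (A *\<^sub>v x t)))) (at t within {0..})"
proof -
  have xt: "x t \<in> carrier_vec m" using x t A unfolding lin_solution_def by auto
  have dx: "((\<lambda>s. x s $ i) has_vector_derivative (A *\<^sub>v x t) $ i) (at t within {0..})" if "i < m" for i
    using x t A that unfolding lin_solution_def by auto
  let ?y = "A *\<^sub>v x t"
  have "((\<lambda>s. (\<Sum>i<m. x s $ i * cnj (\<Sum>j<m. Q $$ (i,j) * x s $ j))) has_vector_derivative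
      (\<Sum>i<m. x t $ i * cnj (\<Sum>j<m. Q $$ (i,j) * ?y $ j) + ?y $ i * cnj (\<Sum>j<m. Q $$ (i,j) * x t $ j)))
      (at t within {0..})"
    by (intro has_vector_derivative_sum has_vector_derivative_mult has_vector_derivative_cnj
        has_vector_derivative_mult_right dx) auto
  also have "(\<Sum>i<m. x t $ i * cnj (\<Sum>j<m. Q $$ (i,j) * ?y $ j) + ?y $ i * cnj (\<Sum>j<m. Q $$ (i,j) * x t $ j))
      = cinner ?y (Q *\<^sub>v x t) + cinner (x t) (Q *\<^sub>v ?y)"
  proof -
    have dy: "dim_vec ?y = m" "dim_vec (x t) = m" using A xt by auto
    have q1: "(Q *\<^sub>v x t) $ i = (\<Sum>j<m. Q $$ (i,j) * x t $ j)" if "i < m" for i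
      using mult_mat_vec_sum[OF Q xt that] .
    have q2: "(Q *\<^sub>v ?y) $ i = (\<Sum>j<m. Q $$ (i,j) * ?y $ j)" if "i < m" for i
      using mult_mat_vec_sum[OF Q _ that] A xt by auto
    show ?thesis unfolding cinner_def dy
      by (simp del: index_mult_mat_vec add: q1 q2 sum.distrib add.commute)
  qed
  finally have "((\<lambda>s. (\<Sum>i<m. x s $ i * cnj (\<Sum>j<m. Q $$ (i,j) * x s $ j))) has_vector_derivative
      cinner ?y (Q *\<^sub>v x t) + cinner (x t) (Q *\<^sub>v ?y)) (at t within {0..})" .
  from bounded_linear.has_vector_derivative[OF bounded_linear_Re this]
  show ?thesis unfolding has_real_derivative_iff_has_vector_derivative .
qed



lemma lyap_stable:
  assumes A: "A \<in> carrier_mat m m" and Q: "Q \<in> carrier_mat m m" "mat_adjoint Q = Q"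
   and c1: "c1 > 0" and low: "\<And>w. w \<in> carrier_vec m \<Longrightarrow> c1 * (cvnorm w)\<^sup>2 \<le> Re (cinner w (Q *\<^sub>v w))"
   and eps: "eps > 0"
   and dec: "\<And>w. w \<in> carrier_vec m \<Longrightarrow> Re (cinner w (Q *\<^sub>v (A *\<^sub>v w))) \<le> - eps * (cvnorm w)\<^sup>2"
  shows "exp_stable A"
proof -
  define c2 where "c2 = frob Q + 1"
  have c2: "c2 > 0" unfolding c2_def using frob_nonneg[of Q] by simp
  have up: "Re (cinner w (Q *\<^sub>v w)) \<le> c2 * (cvnorm w)\<^sup>2" if w: "w \<in> carrier_vec m" for w
  proof -
    have "Re (cinner w (Q *\<^sub>v w)) \<le> cmod (cinner w (Q *\<^sub>v w))" by (rule complex_Re_le_cmod)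
    also have "\<dots> \<le> cvnorm w * cvnorm (Q *\<^sub>v w)" by (rule cinner_cs) (use Q w in auto)
    also have "\<dots> \<le> cvnorm w * (frob Q * cvnorm w)"
      by (rule mult_left_mono[OF mat_vec_frob[OF Q(1) w] cvnorm_nonneg])
    also have "\<dots> \<le> cvnorm w * (c2 * cvnorm w)"
    proof (rule mult_left_mono[OF _ cvnorm_nonneg])
      show "frob Q * cvnorm w \<le> c2 * cvnorm w" unfolding c2_def
        by (rule mult_right_mono[OF _ cvnorm_nonneg]) simp
    qed
    finally show ?thesis by (simp add: power2_eq_square mult_ac)
  qed
  define lam where "lam = 2 * eps / c2"
  have lam: "lam > 0" unfolding lam_def using eps c2 by simp
  show ?thesis unfolding exp_stable_def
  proof (rule exI[of _ "sqrt (c2 / c1)"], rule exI[of _ "lam / 2"], intro conjI allI impI)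
    show "lam / 2 > 0" using lam by simp
    fix x t assume x: "lin_solution A x" and t: "(t::real) \<ge> 0"
    have xs: "x s \<in> carrier_vec m" if "s \<ge> 0" for s using x that A unfolding lin_solution_def by auto
    define V where "V s = Re (\<Sum>i<m. x s $ i * cnj (\<Sum>j<m. Q $$ (i,j) * x s $ j))" for s
    have Vf: "V s = Re (cinner (x s) (Q *\<^sub>v x s))" if s: "s \<ge> 0" for s
      unfolding V_def cinner_def using xs[OF s] Q
      by (simp del: index_mult_mat_vec add: mult_mat_vec_sum[OF Q(1) xs[OF s]])
    have Dv: "\<exists>d. (V has_real_derivative d) (at s within {0..}) \<and> d \<le> - lam * V s" if s: "s \<ge> 0" for s
    proof -
      let ?d = "Re (cinner (A *\<^sub>v x s) (Q *\<^sub>v x s) + cinner (x s) (Q *\<^sub>v (A *\<^sub>v x s)))"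
      have "(V has_real_derivative ?d) (at s within {0..})"
        unfolding V_def[abs_def] by (rule quad_deriv[OF A Q(1) x s])
      moreover have "?d \<le> - lam * V s"
      proof -
        have Ax: "A *\<^sub>v x s \<in> carrier_vec m" using A xs[OF s] by auto
        have "cinner (A *\<^sub>v x s) (Q *\<^sub>v x s) = cnj (cinner (x s) (Q *\<^sub>v (A *\<^sub>v x s)))"
          by (rule herm_swap[OF Q xs[OF s] Ax])
        hence "?d = 2 * Re (cinner (x s) (Q *\<^sub>v (A *\<^sub>v x s)))" by simp
        also have "\<dots> \<le> 2 * (- eps * (cvnorm (x s))\<^sup>2)" using dec[OF xs[OF s]] by simp
        also have "\<dots> \<le> - lam * V s"
        proof -
          have "V s \<le> c2 * (cvnorm (x s))\<^sup>2" using up[OF xs[OF s]] Vf[OF s] by simp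
          hence "lam * V s \<le> lam * (c2 * (cvnorm (x s))\<^sup>2)" using lam by (intro mult_left_mono) auto
          also have "\<dots> = 2 * eps * (cvnorm (x s))\<^sup>2" unfolding lam_def using c2 by simp
          finally show ?thesis by simp
        qed
        finally show ?thesis .
      qed
      ultimately show ?thesis by blast
    qed
    have Vt: "V t \<le> exp (- lam * t) * V 0" by (rule decay_real[OF Dv t])
    have "c1 * (cvnorm (x t))\<^sup>2 \<le> V t" using low[OF xs[OF t]] Vf[OF t] by simp
    also have "\<dots> \<le> exp (- lam * t) * V 0" by (rule Vt)
    also have "\<dots> \<le> exp (- lam * t) * (c2 * (cvnorm (x 0))\<^sup>2)"
      using up[OF xs[of 0]] Vf[of 0] by (intro mult_left_mono) auto
    finally have h: "c1 * (cvnorm (x t))\<^sup>2 \<le> exp (- lam * t) * (c2 * (cvnorm (x 0))\<^sup>2)" .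
    have "(cvnorm (x t))\<^sup>2 \<le> (sqrt (c2 / c1) * exp (- (lam / 2) * t) * cvnorm (x 0))\<^sup>2"
    proof -
      have e: "(exp (- (lam / 2) * t))\<^sup>2 = exp (- lam * t)"
        by (simp add: power2_eq_square exp_add[symmetric])
      have "(sqrt (c2 / c1) * exp (- (lam / 2) * t) * cvnorm (x 0))\<^sup>2
          = c2 / c1 * exp (- lam * t) * (cvnorm (x 0))\<^sup>2"
      proof -
        have s2: "(sqrt (c2 / c1))\<^sup>2 = c2 / c1" using c1 c2 by simp
        show ?thesis by (simp only: power_mult_distrib e s2)
      qed
      moreover have "(cvnorm (x t))\<^sup>2 \<le> c2 / c1 * exp (- lam * t) * (cvnorm (x 0))\<^sup>2"
        using h c1 by (simp add: field_simps)
      ultimately show ?thesis by simp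
    qed
    thus "cvnorm (x t) \<le> sqrt (c2 / c1) * exp (- (lam / 2) * t) * cvnorm (x 0)"
      by (rule power2_le_imp_le) (use c1 c2 in \<open>intro mult_nonneg_nonneg cvnorm_nonneg; simp\<close>)
  qed
qed



lemma smult_mat_vec: "(A :: complex mat) \<in> carrier_mat r c \<Longrightarrow> v \<in> carrier_vec c \<Longrightarrow> (k \<cdot>\<^sub>m A) *\<^sub>v v = k \<cdot>\<^sub>v (A *\<^sub>v v)"
  by (intro eq_vecI) (auto simp: scalar_prod_def sum_distrib_left mult.assoc)

lemma mat_vec_uminus: "(A :: complex mat) \<in> carrier_mat r c \<Longrightarrow> v \<in> carrier_vec c \<Longrightarrow> A *\<^sub>v (- v) = - (A *\<^sub>v v)"
proof (intro eq_vecI)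
  fix i assume A: "A \<in> carrier_mat r c" and v: "v \<in> carrier_vec c" and i: "i < dim_vec (- (A *\<^sub>v v))"
  hence i': "i < r" by simp
  have "(A *\<^sub>v (- v)) $ i = (\<Sum>j<c. A $$ (i,j) * (- v) $ j)"
    by (rule mult_mat_vec_sum[OF A _ i']) (use v in simp)
  also have "\<dots> = (\<Sum>j<c. - (A $$ (i,j) * v $ j))" using carrier_vecD[OF v] by (intro sum.cong) auto
  also have "\<dots> = - (A *\<^sub>v v) $ i" using mult_mat_vec_sum[OF A v i'] A i' by (simp add: sum_negf)
  finally show "(A *\<^sub>v (- v)) $ i = (- (A *\<^sub>v v)) $ i" using A i' by simp
qed auto

lemma cinner_uminus_right: "dim_vec v = dim_vec u \<Longrightarrow> cinner u (- v) = - cinner u v"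
  unfolding cinner_def by (auto simp: sum_negf intro!: sum.cong)

lemma cinner_minus_right: "u \<in> carrier_vec n \<Longrightarrow> w \<in> carrier_vec n \<Longrightarrow> v \<in> carrier_vec n \<Longrightarrow>
   cinner v (u - w) = cinner v u - cinner v w"
  unfolding cinner_def by (simp add: ring_distribs sum_subtractf)

lemma pos_def_psd: "pos_def Q \<Longrightarrow> Q \<in> carrier_mat m m \<Longrightarrow> w \<in> carrier_vec m \<Longrightarrow> Re (cinner w (Q *\<^sub>v w)) \<ge> 0"
  unfolding pos_def_def
  by (cases "w = 0\<^sub>v m") (auto simp: cinner_def intro: less_imp_le)

lemma lyap_lower:
  assumes J: "J \<in> carrier_mat m m" and Q: "Q \<in> carrier_mat m m" "mat_adjoint Q = Q"
    and psd: "\<And>w. w \<in> carrier_vec m \<Longrightarrow> Re (cinner w (Q *\<^sub>v w)) \<ge> 0"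
    and ly: "\<And>w. w \<in> carrier_vec m \<Longrightarrow> (cvnorm w)\<^sup>2 \<le> Re (cinner w (Q *\<^sub>v (J *\<^sub>v w)))"
  shows "\<exists>c1>0. \<forall>w\<in>carrier_vec m. c1 * (cvnorm w)\<^sup>2 \<le> Re (cinner w (Q *\<^sub>v w))"
proof -
  define K where "K = frob Q * (frob J)\<^sup>2 + 1"
  have "frob Q * (frob J)\<^sup>2 \<ge> 0" using frob_nonneg[of Q] by simp
  hence K: "K > 0" unfolding K_def by linarith
  have "\<forall>w\<in>carrier_vec m. 1 / K * (cvnorm w)\<^sup>2 \<le> Re (cinner w (Q *\<^sub>v w))"
  proof
    fix w :: "complex vec" assume w: "w \<in> carrier_vec m"
    have Jw: "J *\<^sub>v w \<in> carrier_vec m" using J w by auto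
    define a where "a = (cvnorm w)\<^sup>2"
    define b where "b = Re (cinner w (Q *\<^sub>v w))"
    have a0: "a \<ge> 0" unfolding a_def by simp
    have b0: "b \<ge> 0" unfolding b_def using psd[OF w] .
    have "a\<^sup>2 \<le> (cmod (cinner w (Q *\<^sub>v (J *\<^sub>v w))))\<^sup>2"
    proof (rule power_mono)
      show "a \<le> cmod (cinner w (Q *\<^sub>v (J *\<^sub>v w)))"
        unfolding a_def using ly[OF w] complex_Re_le_cmod order_trans by blast
    qed (rule a0)
    also have "\<dots> \<le> b * Re (cinner (J *\<^sub>v w) (Q *\<^sub>v (J *\<^sub>v w)))"
      unfolding b_def by (rule herm_cs[OF Q psd w Jw])
    also have "Re (cinner (J *\<^sub>v w) (Q *\<^sub>v (J *\<^sub>v w))) \<le> frob Q * (frob J)\<^sup>2 * a"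
    proof -
      have "Re (cinner (J *\<^sub>v w) (Q *\<^sub>v (J *\<^sub>v w))) \<le> cmod (cinner (J *\<^sub>v w) (Q *\<^sub>v (J *\<^sub>v w)))"
        by (rule complex_Re_le_cmod)
      also have "\<dots> \<le> cvnorm (J *\<^sub>v w) * cvnorm (Q *\<^sub>v (J *\<^sub>v w))" by (rule cinner_cs) (use Q Jw J in auto)
      also have "\<dots> \<le> cvnorm (J *\<^sub>v w) * (frob Q * cvnorm (J *\<^sub>v w))"
        by (rule mult_left_mono[OF mat_vec_frob[OF Q(1) Jw] cvnorm_nonneg])
      also have "\<dots> = frob Q * (cvnorm (J *\<^sub>v w))\<^sup>2" by (simp add: power2_eq_square)
      also have "\<dots> \<le> frob Q * (frob J * cvnorm w)\<^sup>2"
        by (intro mult_left_mono power_mono mat_vec_frob[OF J w] cvnorm_nonneg frob_nonneg)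
      also have "\<dots> = frob Q * (frob J)\<^sup>2 * a" unfolding a_def by (simp add: power_mult_distrib)
      finally show ?thesis .
    qed
    hence "b * Re (cinner (J *\<^sub>v w) (Q *\<^sub>v (J *\<^sub>v w))) \<le> b * (frob Q * (frob J)\<^sup>2 * a)"
      by (rule mult_left_mono[OF _ b0])
    finally have h: "a\<^sup>2 \<le> b * (frob Q * (frob J)\<^sup>2 * a)" .
    have "a \<le> K * b"
    proof (cases "a = 0")
      case True thus ?thesis using K b0 by simp
    next
      case False
      hence ap: "a > 0" using a0 by simp
      from h have "a * a \<le> (b * frob Q * (frob J)\<^sup>2) * a" by (simp add: power2_eq_square mult_ac)
      hence "a \<le> b * frob Q * (frob J)\<^sup>2" using ap by simp
      also have "\<dots> \<le> K * b" unfolding K_def using b0 by (simp add: algebra_simps)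
      finally show ?thesis .
    qed
    thus "1 / K * (cvnorm w)\<^sup>2 \<le> Re (cinner w (Q *\<^sub>v w))"
      using K unfolding a_def b_def by (simp add: field_simps mult.commute)
  qed
  thus ?thesis using K by (intro exI[of _ "1/K"]) auto
qed

lemma stable_core:
  assumes J: "J \<in> carrier_mat m m" and X: "X \<in> carrier_mat m m" and Q: "Q \<in> carrier_mat m m"
    and Qpd: "pos_def Q"
    and lyap: "loewner_ge (Q * J + mat_adjoint J * Q) (2 \<cdot>\<^sub>m 1\<^sub>m m)"
    and k0: "0 \<le> kappa" and kb: "kappa * spec_norm (Q * X) < 1"
  shows "exp_stable (- J + complex_of_real kappa \<cdot>\<^sub>m X)"
proof -
  have QH: "mat_adjoint Q = Q" using Qpd unfolding pos_def_def hermitian_def by simp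
  have psd: "\<And>w. w \<in> carrier_vec m \<Longrightarrow> Re (cinner w (Q *\<^sub>v w)) \<ge> 0"
    using pos_def_psd[OF Qpd Q] .
  have JH: "mat_adjoint J \<in> carrier_mat m m" using mat_adjoint_carrier[OF J] .
  have ly: "(cvnorm w)\<^sup>2 \<le> Re (cinner w (Q *\<^sub>v (J *\<^sub>v w)))" if w: "w \<in> carrier_vec m" for w
  proof -
    have Jw: "J *\<^sub>v w \<in> carrier_vec m" and Qw: "Q *\<^sub>v w \<in> carrier_vec m"
      and QJw: "Q *\<^sub>v (J *\<^sub>v w) \<in> carrier_vec m" and JQw: "mat_adjoint J *\<^sub>v (Q *\<^sub>v w) \<in> carrier_vec m"
      using J Q w JH by auto
    have dimr: "dim_row (Q * J + mat_adjoint J * Q - 2 \<cdot>\<^sub>m 1\<^sub>m m) = m" by simp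
    have "Re (cinner w ((Q * J + mat_adjoint J * Q - 2 \<cdot>\<^sub>m 1\<^sub>m m) *\<^sub>v w)) \<ge> 0"
      using lyap w unfolding loewner_ge_def pos_semidef_def dimr by blast
    moreover have "(Q * J + mat_adjoint J * Q - 2 \<cdot>\<^sub>m 1\<^sub>m m) *\<^sub>v w
        = Q *\<^sub>v (J *\<^sub>v w) + mat_adjoint J *\<^sub>v (Q *\<^sub>v w) - 2 \<cdot>\<^sub>v w"
      using J Q JH w
      by (simp add: minus_mult_distrib_mat_vec[of _ m m] add_mult_distrib_mat_vec[of _ m m]
          smult_mat_vec[of _ m m])
    moreover have "cinner w (mat_adjoint J *\<^sub>v (Q *\<^sub>v w)) = cnj (cinner w (Q *\<^sub>v (J *\<^sub>v w)))"
    proof -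
      have "cinner w (mat_adjoint J *\<^sub>v (Q *\<^sub>v w)) = cinner (J *\<^sub>v w) (Q *\<^sub>v w)"
        using cinner_adj[OF J w Qw] by simp
      also have "\<dots> = cnj (cinner w (Q *\<^sub>v (J *\<^sub>v w)))" by (rule herm_swap[OF Q QH w Jw])
      finally show ?thesis .
    qed
    ultimately have "0 \<le> Re (cinner w (Q *\<^sub>v (J *\<^sub>v w)) + cnj (cinner w (Q *\<^sub>v (J *\<^sub>v w))) - 2 * cinner w w)"
      using w QJw JQw
      by (simp add: cinner_minus_right[of _ m] cinner_add_right[of _ m] cinner_smult_right)
    thus ?thesis by (simp add: cinner_self)
  qed
  obtain c1 where c1: "c1 > 0" "\<And>w. w \<in> carrier_vec m \<Longrightarrow> c1 * (cvnorm w)\<^sup>2 \<le> Re (cinner w (Q *\<^sub>v w))"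
    using lyap_lower[OF J Q QH psd ly] by blast
  define s where "s = spec_norm (Q * X)"
  define eps where "eps = 1 - kappa * s"
  have eps: "eps > 0" unfolding eps_def s_def using kb by simp
  have A: "- J + complex_of_real kappa \<cdot>\<^sub>m X \<in> carrier_mat m m" using J X by auto
  show ?thesis
  proof (rule lyap_stable[OF A Q QH c1 eps])
    fix w :: "complex vec" assume w: "w \<in> carrier_vec m"
    have Jw: "J *\<^sub>v w \<in> carrier_vec m" and Xw: "X *\<^sub>v w \<in> carrier_vec m" using J X w by auto
    have Av: "(- J + complex_of_real kappa \<cdot>\<^sub>m X) *\<^sub>v w = - (J *\<^sub>v w) + complex_of_real kappa \<cdot>\<^sub>v (X *\<^sub>v w)"
      using J X w by (simp add: add_mult_distrib_mat_vec[of _ m m] smult_mat_vec[of _ m m])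
    have QAv: "Q *\<^sub>v ((- J + complex_of_real kappa \<cdot>\<^sub>m X) *\<^sub>v w)
        = - (Q *\<^sub>v (J *\<^sub>v w)) + complex_of_real kappa \<cdot>\<^sub>v (Q *\<^sub>v (X *\<^sub>v w))"
    proof -
      have neg: "Q *\<^sub>v (- (J *\<^sub>v w)) = - (Q *\<^sub>v (J *\<^sub>v w))" by (rule mat_vec_uminus[OF Q Jw])
      show ?thesis unfolding Av using Q Jw Xw
        by (simp add: mult_add_distrib_mat_vec[of _ m m] mult_mat_vec[of _ m m] neg)
    qed
    have QJw: "Q *\<^sub>v (J *\<^sub>v w) \<in> carrier_vec m" and QXw: "Q *\<^sub>v (X *\<^sub>v w) \<in> carrier_vec m"
      using Q Jw Xw by auto
    have "cinner w (Q *\<^sub>v ((- J + complex_of_real kappa \<cdot>\<^sub>m X) *\<^sub>v w))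
       = - cinner w (Q *\<^sub>v (J *\<^sub>v w)) + complex_of_real kappa * cinner w (Q *\<^sub>v (X *\<^sub>v w))"
    proof -
      have d1: "dim_vec (Q *\<^sub>v (J *\<^sub>v w)) = dim_vec w" "dim_vec (Q *\<^sub>v (X *\<^sub>v w)) = dim_vec w"
        using Q QJw QXw w by auto
      show ?thesis unfolding QAv using w QJw QXw
        by (simp add: cinner_add_right[of _ m] cinner_uminus_right[OF d1(1)] cinner_smult_right[OF d1(2)])
    qed
    hence eq: "Re (cinner w (Q *\<^sub>v ((- J + complex_of_real kappa \<cdot>\<^sub>m X) *\<^sub>v w)))
       = - Re (cinner w (Q *\<^sub>v (J *\<^sub>v w))) + kappa * Re (cinner w (Q *\<^sub>v (X *\<^sub>v w)))" by simp
    have "Re (cinner w (Q *\<^sub>v (X *\<^sub>v w))) \<le> s * (cvnorm w)\<^sup>2"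
    proof -
      have QX: "Q * X \<in> carrier_mat m m" using Q X by auto
      have "Re (cinner w (Q *\<^sub>v (X *\<^sub>v w))) \<le> cmod (cinner w (Q *\<^sub>v (X *\<^sub>v w)))" by (rule complex_Re_le_cmod)
      also have "\<dots> \<le> cvnorm w * cvnorm (Q *\<^sub>v (X *\<^sub>v w))" by (rule cinner_cs) (use Q QXw w in auto)
      also have "cvnorm w * cvnorm (Q *\<^sub>v (X *\<^sub>v w)) \<le> cvnorm w * (s * cvnorm w)"
      proof (rule mult_left_mono[OF _ cvnorm_nonneg])
        have "Q *\<^sub>v (X *\<^sub>v w) = (Q * X) *\<^sub>v w" using Q X w by auto
        thus "cvnorm (Q *\<^sub>v (X *\<^sub>v w)) \<le> s * cvnorm w" using spec_norm_bound[OF QX w] unfolding s_def by simp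
      qed
      finally show ?thesis by (simp add: power2_eq_square mult_ac)
    qed
    hence "kappa * Re (cinner w (Q *\<^sub>v (X *\<^sub>v w))) \<le> kappa * (s * (cvnorm w)\<^sup>2)"
      by (rule mult_left_mono[OF _ k0])
    thus "Re (cinner w (Q *\<^sub>v ((- J + complex_of_real kappa \<cdot>\<^sub>m X) *\<^sub>v w))) \<le> - eps * (cvnorm w)\<^sup>2"
      unfolding eq eps_def using ly[OF w] by (simp add: algebra_simps)
  qed
qed



lemma jm_entry:
  fixes n_as :: "(nat \<times> complex) list"
  assumes i: "i < sum_list (map fst n_as)" and j: "j < sum_list (map fst n_as) + 2"
  shows "jordan_matrix ((1,0)#(1,0)#n_as) $$ (i+2, j) = (if j < 2 then 0 else jordan_matrix n_as $$ (i, j-2))"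
  using i j by (auto simp: jordan_matrix_Cons jordan_block_def numeral_2_eq_2)

lemma J2_nz:
  fixes C T Tinv :: "complex mat" and n_as :: "(nat \<times> complex) list"
  assumes C: "C \<in> carrier_mat N N" and T: "T \<in> carrier_mat N N" and Ti: "Tinv \<in> carrier_mat N N"
    and inv1: "T * Tinv = 1\<^sub>m N" and inv2: "Tinv * T = 1\<^sub>m N"
    and jor: "T * C * Tinv = jordan_matrix ((1,0)#(1,0)#n_as)"
    and ord: "Polynomial.order 0 (char_poly C) = 2"
  shows "poly (char_poly (jordan_matrix n_as)) 0 \<noteq> 0"
proof -
  let ?Jm = "jordan_matrix ((1,0)#(1,0)#n_as)"
  let ?J2 = "jordan_matrix n_as"
  have Jm: "?Jm \<in> carrier_mat N N" unfolding jor[symmetric] using T C Ti by auto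
  have "Tinv * ?Jm = C * Tinv"
  proof -
    have "Tinv * ?Jm = Tinv * (T * C * Tinv)" by (simp add: jor)
    also have "\<dots> = (Tinv * (T * C)) * Tinv" using T C Ti by (simp add: assoc_mult_mat[of _ N N _ N _ N])
    also have "Tinv * (T * C) = (Tinv * T) * C" using T C Ti by (simp add: assoc_mult_mat[of _ N N _ N _ N])
    also have "\<dots> = C" using inv2 C by simp
    finally show ?thesis .
  qed
  hence "Tinv * ?Jm * T = C * Tinv * T" by simp
  also have "\<dots> = C * (Tinv * T)" using T C Ti by (simp add: assoc_mult_mat[of _ N N _ N _ N])
  also have "\<dots> = C" using inv2 C by simp
  finally have CJ: "C = Tinv * ?Jm * T" by simp
  have "similar_mat C ?Jm" unfolding similar_mat_def similar_mat_wit_def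
    by (rule exI[of _ Tinv], rule exI[of _ T]) (use C T Ti Jm inv1 inv2 CJ in \<open>auto simp: Let_def\<close>)
  hence cp: "char_poly C = char_poly ?Jm" by (rule char_poly_similar)
  have cpJ: "char_poly ?Jm = [:- 0, 1:] ^ 1 * ([:- 0, 1:] ^ 1 * char_poly ?J2)"
    unfolding jordan_matrix_char_poly by simp
  have nz: "char_poly ?J2 \<noteq> 0"
  proof -
    have "?J2 \<in> carrier_mat (sum_list (map fst n_as)) (sum_list (map fst n_as))" by simp
    from degree_monic_char_poly[OF this] show ?thesis by auto
  qed
  have x0: "([:- 0, 1:] :: complex poly) ^ 1 \<noteq> 0" by simp
  have "Polynomial.order 0 (char_poly ?Jm) = 1 + (1 + Polynomial.order 0 (char_poly ?J2))"
    unfolding cpJ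
    by (subst order_mult, use nz x0 in simp, subst order_mult, use nz x0 in simp,
        simp only: order_power_n_n)
  hence "Polynomial.order 0 (char_poly ?J2) = 0" using ord cp by simp
  thus ?thesis using nz order_root by blast
qed

lemma ker_low:
  fixes C T Tinv :: "complex mat" and n_as :: "(nat \<times> complex) list"
  assumes C: "C \<in> carrier_mat N N" and T: "T \<in> carrier_mat N N" and Ti: "Tinv \<in> carrier_mat N N"
    and inv2: "Tinv * T = 1\<^sub>m N"
    and jor: "T * C * Tinv = jordan_matrix ((1,0)#(1,0)#n_as)"
    and nzp: "poly (char_poly (jordan_matrix n_as)) 0 \<noteq> 0"
    and s: "s \<in> carrier_vec N" and Cs: "C *\<^sub>v s = 0\<^sub>v N" and i: "i < N - 2"
  shows "(T *\<^sub>v s) $ (i+2) = 0"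
proof -
  let ?Jm = "jordan_matrix ((1,0)#(1,0)#n_as)"
  let ?J2 = "jordan_matrix n_as"
  define N2 where "N2 = sum_list (map fst n_as)"
  have Jm: "?Jm \<in> carrier_mat N N" unfolding jor[symmetric] using T C Ti by auto
  have NN: "N = N2 + 2" using carrier_matD(1)[OF Jm] unfolding N2_def by simp
  have J2: "?J2 \<in> carrier_mat N2 N2" unfolding N2_def by simp
  define u where "u = T *\<^sub>v s"
  have u: "u \<in> carrier_vec N" unfolding u_def using T s by auto
  have Ju: "?Jm *\<^sub>v u = 0\<^sub>v N"
  proof -
    have "?Jm *\<^sub>v u = (T * C * Tinv) *\<^sub>v (T *\<^sub>v s)" unfolding u_def jor ..
    also have "\<dots> = ((T * C * Tinv) * T) *\<^sub>v s" using T C Ti s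
      by (simp add: assoc_mult_mat_vec[of _ N N _ N s])
    also have "(T * C * Tinv) * T = (T * C) * (Tinv * T)" using T C Ti
      by (simp add: assoc_mult_mat[of _ N N _ N _ N])
    also have "\<dots> = T * C" using inv2 T C by simp
    also have "(T * C) *\<^sub>v s = T *\<^sub>v (C *\<^sub>v s)" using T C s by simp
    also have "\<dots> = 0\<^sub>v N" using Cs T by (auto intro!: eq_vecI simp: scalar_prod_def)
    finally show ?thesis .
  qed
  define ul where "ul = vec N2 (\<lambda>k. u $ (k+2))"
  have ul: "ul \<in> carrier_vec N2" unfolding ul_def by simp
  have J2ul: "?J2 *\<^sub>v ul = 0\<^sub>v N2"
  proof (rule eq_vecI)
    show "dim_vec (?J2 *\<^sub>v ul) = dim_vec (0\<^sub>v N2)" unfolding N2_def by simp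
    fix k assume "k < dim_vec (0\<^sub>v N2)"
    hence k: "k < N2" by simp
    have "0 = (?Jm *\<^sub>v u) $ (k+2)" using Ju NN k by simp
    also have "\<dots> = (\<Sum>j<N. ?Jm $$ (k+2, j) * u $ j)" by (rule mult_mat_vec_sum[OF Jm u]) (use NN k in simp)
    also have "\<dots> = (\<Sum>j<Suc (Suc N2). ?Jm $$ (k+2, j) * u $ j)" using NN by simp
    also have "\<dots> = ?Jm $$ (k+2, 0) * u $ 0 + (?Jm $$ (k+2, 1) * u $ 1
        + (\<Sum>j<N2. ?Jm $$ (k+2, j+2) * u $ (j+2)))"
      by (simp add: sum.lessThan_Suc_shift del: sum.lessThan_Suc)
    also have "\<dots> = (\<Sum>j<N2. ?Jm $$ (k+2, j+2) * u $ (j+2))"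
    proof -
      have kk: "k < sum_list (map fst n_as)" using k unfolding N2_def .
      have e0: "?Jm $$ (k+2, 0) = 0" using jm_entry[OF kk, of 0] by simp
      have e1: "?Jm $$ (k+2, 1) = 0" using jm_entry[OF kk, of 1] by simp
      show ?thesis by (simp only: e0 e1 mult_zero_left add_0_left)
    qed
    also have "\<dots> = (\<Sum>j<N2. ?J2 $$ (k, j) * ul $ j)"
    proof (rule sum.cong[OF refl])
      fix j assume "j \<in> {..<N2}"
      hence j: "j < N2" by simp
      have kk: "k < sum_list (map fst n_as)" using k unfolding N2_def .
      have e2: "?Jm $$ (k+2, j+2) = ?J2 $$ (k, j)" using jm_entry[OF kk, of "j+2"] j unfolding N2_def by simp
      have e3: "ul $ j = u $ (j+2)" unfolding ul_def using j by simp
      show "?Jm $$ (k+2, j+2) * u $ (j+2) = ?J2 $$ (k, j) * ul $ j" by (simp only: e2 e3)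
    qed
    also have "\<dots> = (?J2 *\<^sub>v ul) $ k" by (rule mult_mat_vec_sum[OF J2 ul k, symmetric])
    finally show "(?J2 *\<^sub>v ul) $ k = 0\<^sub>v N2 $ k" using k by simp
  qed
  have "ul = 0\<^sub>v N2"
  proof (rule ccontr)
    assume ne: "ul \<noteq> 0\<^sub>v N2"
    have "eigenvector ?J2 ul 0" unfolding eigenvector_def using J2 ul ne J2ul
      by (auto simp: N2_def)
    hence "eigenvalue ?J2 0" unfolding eigenvalue_def by blast
    hence "poly (char_poly ?J2) 0 = 0" using eigenvalue_root_char_poly[OF J2] by simp
    thus False using nzp by simp
  qed
  hence "ul $ i = 0" using i NN by simp
  thus ?thesis unfolding ul_def u_def using i NN by simp
qed



lemma rowTP:
  fixes C T Tinv P :: "complex mat" and n_as :: "(nat \<times> complex) list"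
  assumes C: "C \<in> carrier_mat N N" and T: "T \<in> carrier_mat N N" and Ti: "Tinv \<in> carrier_mat N N"
    and inv2: "Tinv * T = 1\<^sub>m N"
    and jor: "T * C * Tinv = jordan_matrix ((1,0)#(1,0)#n_as)"
    and nzp: "poly (char_poly (jordan_matrix n_as)) 0 \<noteq> 0"
    and P: "P \<in> carrier_mat N N"
    and proj: "\<And>v. v \<in> carrier_vec N \<Longrightarrow> C *\<^sub>v (v - P *\<^sub>v v) = 0\<^sub>v N"
    and r: "2 \<le> r" "r < N"
  shows "row (T * P) r = row T r"
proof (rule eq_vecI)
  show "dim_vec (row (T * P) r) = dim_vec (row T r)" using T P by simp
  fix j assume "j < dim_vec (row T r)"
  hence j: "j < N" using T by simp
  define e :: "complex vec" where "e = unit_vec N j"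
  have e: "e \<in> carrier_vec N" unfolding e_def by simp
  have Pe: "P *\<^sub>v e \<in> carrier_vec N" using P e by simp
  have w: "e - P *\<^sub>v e \<in> carrier_vec N" using e Pe by simp
  have z0: "(T *\<^sub>v (e - P *\<^sub>v e)) $ ((r - 2) + 2) = 0"
    by (rule ker_low[OF C T Ti inv2 jor nzp w proj[OF e]]) (use r in simp)
  have rr: "(r - 2) + 2 = r" using r by simp
  have z: "(T *\<^sub>v (e - P *\<^sub>v e)) $ r = 0" using z0 unfolding rr .
  have "T *\<^sub>v (e - P *\<^sub>v e) = T *\<^sub>v e - T *\<^sub>v (P *\<^sub>v e)"
    by (rule mult_minus_distrib_mat_vec[OF T e Pe])
  hence "(T *\<^sub>v e) $ r = (T *\<^sub>v (P *\<^sub>v e)) $ r" using z T r by simp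
  moreover have "(T *\<^sub>v e) $ r = row T r $ j" unfolding e_def using T r j by simp
  moreover have "T *\<^sub>v (P *\<^sub>v e) = (T * P) *\<^sub>v e" using T P e by simp
  moreover have "((T * P) *\<^sub>v e) $ r = row (T * P) r $ j"
  proof -
    have Pcol: "P *\<^sub>v e = col P j" by (rule eq_vecI) (use P j in \<open>auto simp: e_def\<close>)
    have "((T * P) *\<^sub>v e) $ r = (T *\<^sub>v (P *\<^sub>v e)) $ r" using T P e by simp
    also have "\<dots> = row T r \<bullet> col P j" unfolding Pcol using T r by simp
    also have "\<dots> = row (T * P) r $ j" using T P r j by simp
    finally show ?thesis .
  qed
  ultimately show "row (T * P) r $ j = row T r $ j" by simp
qed

lemma row_mult_eq:
  fixes A A' B :: "complex mat"
  assumes "A \<in> carrier_mat N K" "A' \<in> carrier_mat N K" "B \<in> carrier_mat K L" "r < N"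
    and "row A r = row A' r"
  shows "row (A * B) r = row (A' * B) r"
  using assms by (simp add: row_mult[of A N K B L])

lemma del2_eq:
  fixes X X' :: "complex mat"
  assumes X: "X \<in> carrier_mat N N" and X': "X' \<in> carrier_mat N N"
    and rows: "\<And>r. 2 \<le> r \<Longrightarrow> r < N \<Longrightarrow> row X r = row X' r"
  shows "del2 X = del2 X'"
proof -
  have "X $$ (i+2, j+2) = X' $$ (i+2, j+2)" if "i < N - 2" "j < N - 2" for i j
  proof -
    have "X $$ (i+2, j+2) = row X (i+2) $ (j+2)" using X that by simp
    also have "\<dots> = row X' (i+2) $ (j+2)" using rows[of "i+2"] that by simp
    also have "\<dots> = X' $$ (i+2, j+2)" using X' that by simp
    finally show ?thesis .
  qed
  thus ?thesis unfolding del2_def using X X' by (intro eq_matI) auto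
qed

theorem proposition1:
  fixes n :: nat and E :: "(nat \<times> nat) set" and w :: "nat \<Rightarrow> nat \<Rightarrow> complex"
    and p :: "complex vec" and k :: "nat \<Rightarrow> complex"
    and T Tinv J2 P Q :: "complex mat" and n_as :: "(nat \<times> complex) list"
    and ed :: "(nat \<times> nat) list"
    and mu_t mu_r mu_s :: "nat \<Rightarrow> nat \<Rightarrow> complex"
    and v_star :: complex and a omega_r :: real
    and kappa_t kappa_r kappa_s kappa :: real
  defines "L \<equiv> cLaplacian n E w"
    and "K \<equiv> mat n n (\<lambda>(i,j). if i = j then k i else 0)"
    and "B \<equiv> incidence n ed"
    and "Mt \<equiv> motion_mat n ed mu_t"
    and "Mr \<equiv> motion_mat n ed mu_r"
    and "Ms \<equiv> motion_mat n ed mu_s"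
    and "ones \<equiv> vec n (\<lambda>_. 1 :: complex)"
  assumes n3: "n \<ge> 3"
    and graph: "undirected_graph n E"
    and p_dim: "p \<in> carrier_vec n"
    and p_not_const: "\<not> (\<exists>c. p = c \<cdot>\<^sub>v ones)"
    and w_nz: "\<forall>(i,j) \<in> E. w i j \<noteq> 0"
    and w_shape: "\<forall>i<n. (\<Sum>j\<in>nbrs E i. w i j * (p $ i - p $ j)) = 0"
    and L_alg: "Polynomial.order 0 (char_poly L) = 2"
    and L_ker: "{v \<in> carrier_vec n. L *\<^sub>v v = 0\<^sub>v n} = {c \<cdot>\<^sub>v ones + d \<cdot>\<^sub>v p | c d. True}"
    and k_nz: "\<forall>i<n. k i \<noteq> 0"
    and KL_zero: "Polynomial.order 0 (char_poly (K * L)) = 2"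
    and KL_pos: "\<forall>ev. eigenvalue (K * L) ev \<and> ev \<noteq> 0 \<longrightarrow> Re ev > 0"
    and T_dim: "T \<in> carrier_mat n n" and Tinv_dim: "Tinv \<in> carrier_mat n n"
    and T_inv: "T * Tinv = 1\<^sub>m n" "Tinv * T = 1\<^sub>m n"
    and jordan: "T * (K * L) * Tinv = jordan_matrix ((1,0) # (1,0) # n_as)"
    and J2_def: "J2 = jordan_matrix n_as"
    and P_proj: "orth_proj_perp n {v \<in> carrier_vec n. (K * L) *\<^sub>v v = 0\<^sub>v n} P"
    and orient: "orientation E ed"
    and mu_t_supp: "\<forall>i j. (i,j) \<notin> E \<longrightarrow> mu_t i j = 0"
    and mu_r_supp: "\<forall>i j. (i,j) \<notin> E \<longrightarrow> mu_r i j = 0"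
    and mu_s_supp: "\<forall>i j. (i,j) \<notin> E \<longrightarrow> mu_s i j = 0"
    and Mt_eq: "Mt * transpose_mat B *\<^sub>v p = v_star \<cdot>\<^sub>v ones"
    and Mr_eq: "Mr * transpose_mat B *\<^sub>v p = (\<i> * complex_of_real omega_r) \<cdot>\<^sub>v p"
    and Ms_eq: "Ms * transpose_mat B *\<^sub>v p = complex_of_real a \<cdot>\<^sub>v p"
    and kappas: "kappa_t > 0" "kappa_r > 0" "kappa_s > 0"
    and Q_pd: "Q \<in> carrier_mat (n-2) (n-2)" "pos_def Q"
    and Q_lyap: "loewner_ge (Q * J2 + mat_adjoint J2 * Q) (2 \<cdot>\<^sub>m 1\<^sub>m (n-2))"
    and kappa_nn: "0 \<le> kappa"
    and kappa_bound: "kappa * spec_norm (Q * del2 (T * (complex_of_real kappa_t \<cdot>\<^sub>m Mt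
                         + complex_of_real kappa_r \<cdot>\<^sub>m Mr + complex_of_real kappa_s \<cdot>\<^sub>m Ms)
                         * transpose_mat B * Tinv)) < 1"
  shows "exp_stable (- J2 + complex_of_real kappa \<cdot>\<^sub>m
           del2 (T * P * (complex_of_real kappa_t \<cdot>\<^sub>m Mt
                         + complex_of_real kappa_r \<cdot>\<^sub>m Mr + complex_of_real kappa_s \<cdot>\<^sub>m Ms)
                 * transpose_mat B * Tinv))"
proof -
  have Kc: "K \<in> carrier_mat n n" unfolding K_def by simp
  have Lc: "L \<in> carrier_mat n n" unfolding L_def cLaplacian_def by simp
  have C: "K * L \<in> carrier_mat n n" using Kc Lc by simp
  have Bc: "transpose_mat B \<in> carrier_mat (length ed) n" unfolding B_def incidence_def by simp
  have Mtc: "Mt \<in> carrier_mat n (length ed)" unfolding Mt_def motion_mat_def by simp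
  have Mrc: "Mr \<in> carrier_mat n (length ed)" unfolding Mr_def motion_mat_def by simp
  have Msc: "Ms \<in> carrier_mat n (length ed)" unfolding Ms_def motion_mat_def by simp
  define Mtil where "Mtil = complex_of_real kappa_t \<cdot>\<^sub>m Mt
                         + complex_of_real kappa_r \<cdot>\<^sub>m Mr + complex_of_real kappa_s \<cdot>\<^sub>m Ms"
  have Mc: "Mtil \<in> carrier_mat n (length ed)" unfolding Mtil_def using Mtc Mrc Msc by simp
  have Pc: "P \<in> carrier_mat n n" using P_proj unfolding orth_proj_perp_def by simp
  have proj: "(K * L) *\<^sub>v (v - P *\<^sub>v v) = 0\<^sub>v n" if "v \<in> carrier_vec n" for v
    using P_proj that unfolding orth_proj_perp_def by blast
  have nzp: "poly (char_poly (jordan_matrix n_as)) 0 \<noteq> 0"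
    by (rule J2_nz[OF C T_dim Tinv_dim T_inv jordan KL_zero])
  have Jm: "jordan_matrix ((1,0)#(1,0)#n_as) \<in> carrier_mat n n"
    unfolding jordan[symmetric] using T_dim C Tinv_dim by simp
  have ns: "sum_list (map fst n_as) = n - 2" using carrier_matD(1)[OF Jm] by simp
  have J2c: "J2 \<in> carrier_mat (n-2) (n-2)"
    unfolding J2_def ns[symmetric] by (rule jordan_matrix_carrier)
  define X1 where "X1 = T * P * Mtil * transpose_mat B * Tinv"
  define X2 where "X2 = T * Mtil * transpose_mat B * Tinv"
  have c1: "T * P \<in> carrier_mat n n" by (rule mult_carrier_mat[OF T_dim Pc])
  have c2: "T * P * Mtil \<in> carrier_mat n (length ed)" by (rule mult_carrier_mat[OF c1 Mc])
  have c3: "T * P * Mtil * transpose_mat B \<in> carrier_mat n n" by (rule mult_carrier_mat[OF c2 Bc])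
  have X1c: "X1 \<in> carrier_mat n n" unfolding X1_def by (rule mult_carrier_mat[OF c3 Tinv_dim])
  have d2: "T * Mtil \<in> carrier_mat n (length ed)" by (rule mult_carrier_mat[OF T_dim Mc])
  have d3: "T * Mtil * transpose_mat B \<in> carrier_mat n n" by (rule mult_carrier_mat[OF d2 Bc])
  have X2c: "X2 \<in> carrier_mat n n" unfolding X2_def by (rule mult_carrier_mat[OF d3 Tinv_dim])
  have "del2 X1 = del2 X2"
  proof (rule del2_eq[OF X1c X2c])
    fix r assume r: "2 \<le> r" "r < n"
    have r1: "row (T * P) r = row T r"
      by (rule rowTP[OF C T_dim Tinv_dim T_inv(2) jordan nzp Pc proj r])
    have r2: "row (T * P * Mtil) r = row (T * Mtil) r"
      by (rule row_mult_eq[OF c1 T_dim Mc r(2) r1])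
    have r3: "row (T * P * Mtil * transpose_mat B) r = row (T * Mtil * transpose_mat B) r"
      by (rule row_mult_eq[OF c2 d2 Bc r(2) r2])
    show "row X1 r = row X2 r" unfolding X1_def X2_def
      by (rule row_mult_eq[OF c3 d3 Tinv_dim r(2) r3])
  qed
  have Xc: "del2 X2 \<in> carrier_mat (n-2) (n-2)" unfolding del2_def using X2c by simp
  have "exp_stable (- J2 + complex_of_real kappa \<cdot>\<^sub>m del2 X2)"
    by (rule stable_core[OF J2c Xc Q_pd(1) Q_pd(2) Q_lyap kappa_nn])
       (use kappa_bound in \<open>simp add: X2_def Mtil_def\<close>)
  thus ?thesis using \<open>del2 X1 = del2 X2\<close> unfolding X1_def Mtil_def by simp
qed


end
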